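(* Let $n_1,n_2,n_3$ be integers with $3\le n_1,n_2\le n_3$ and $3\max(n_1,n_2)\le 2n_3\le n_1n_2$. Then the Middle Cone Construction described below can be carried out (in particular, when $n_2$ is odd and $k\le1$, a left column with first coordinate not in $\{1,2,n_1\}$ and second coordinate $1$ exists), and for every set $W$ it produces, in the landmark graph $\mathcal{G}(W)$ every hyperedge of color $3$ has exactly two vertices, and every hyperedge of color $1$ and every hyperedge of color $2$ has at least three vertices.
   Context: $K(\mathbf{n})=K_{n_1}\times K_{n_2}\times K_{n_3}$: vertices are triples $(x_1,x_2,x_3)$, $1\le x_i\le n_i$, adjacent iff they differ in every coordinate. For a vertex set $W$, $W_{i,a}=\{w\in W:w_i=a\}$, and the landmark graph $\mathcal{G}(W)$ is the hypergraph on $W$ whose hyperedges are the nonempty $W_{i,a}$, colored $i$. Multiplicities: write $n_3=qn_1+r$, $0\le r\le n_1-1$. If $r\le n_1-r$, $(\ell_1,\dots,\ell_{n_1})$ is $(q+1,q)$ repeated $r$ times followed by $n_1-2r$ copies of $q$; if $r>n_1-r$, it is $(q+1,q)$ repeated $n_1-r$ times followed by $2r-n_1$ copies of $q+1$. Let $L_i=\sum_{j<i}\ell_j$, so block $i$ consists of columns $c$ with $L_i<c\le L_i+\ell_i$; $s_i=L_i+1$ is the start of block $i$. Middle Cone Construction: $W=W^L\cup W^R$, where $W^L$ (left) and $W^R$ (right) each consist of $n_3$ landmarks indexed by columns $c=1,\dots,n_3$. Left column $c$ in block $i$ is $(i,\,y^L_c,\,c)$; right column $c$ in block $i$ is $(i+1,\,y^R_c,\,c)$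 with $n_1+1$ read as $1$. Even $n_2$, $h=n_2/2$: $y^L_c=((c-1)\bmod h)+1$ and $y^R_c=h+((c-1)\bmod h)+1$. Odd $n_2$, $f=(n_2-1)/2$, $k=\#\{i:\ell_i>f\}$. Choose a set $S$ of "neutral" left columns: if $k\ge2$, $S=\{s_i:\ell_i>f\}$; if $k\le1$, $S=\{1\}$. Set $y^L_c=n_2$ for $c\in S$, and fill the remaining left columns, in increasing order of $c$, with the periodic sequence $1,2,\dots,f,1,2,\dots,f,\dots$. Set $y^R_c=n_2$ for $c\in S+1$, and fill the remaining right columns in increasing order with $f+1,\dots,2f,f+1,\dots,2f,\dots$. If $k\le1$, additionally choose one left landmark of the form $(x,1,z)$ with $x\notin\{1,2,n_1\}$ and change its second coordinate to $n_2$ (any such choice is allowed). *)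

theory Defs
  imports Main
begin

type_synonym vtx = "nat \<times> nat \<times> nat"

text \<open>Vertices of K(n1) x K(n2) x K(n3).\<close>
definition vertices :: "nat \<Rightarrow> nat \<Rightarrow> nat \<Rightarrow> vtx set" where
  "vertices n1 n2 n3 = {1..n1} \<times> {1..n2} \<times> {1..n3}"

definition coord :: "nat \<Rightarrow> vtx \<Rightarrow> nat" where
  "coord i w = (if i = 1 then fst w else if i = 2 then fst (snd w) else snd (snd w))"

definition slice :: "vtx set \<Rightarrow> nat \<Rightarrow> nat \<Rightarrow> vtx set" where
  "slice W i a = {w \<in> W. coord i w = a}"

definition landmark_hyperedges :: "vtx set \<Rightarrow> (nat \<times> vtx set) set" where
  "landmark_hyperedges W =
     {(i, slice W i a) | i a. i \<in> {1,2,3} \<and> slice W i a \<noteq> {}}"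

definition ell :: "nat \<Rightarrow> nat \<Rightarrow> nat \<Rightarrow> nat" where
  "ell n1 n3 i =
     (let q = n3 div n1; r = n3 mod n1 in
      if r \<le> n1 - r then (if i \<le> 2 * r \<and> odd i then q + 1 else q)
      else (if i \<le> 2 * (n1 - r) then (if odd i then q + 1 else q) else q + 1))"

definition Lsum :: "nat \<Rightarrow> nat \<Rightarrow> nat \<Rightarrow> nat" where
  "Lsum n1 n3 i = (\<Sum>j\<in>{1..<i}. ell n1 n3 j)"

definition sstart :: "nat \<Rightarrow> nat \<Rightarrow> nat \<Rightarrow> nat" where
  "sstart n1 n3 i = Lsum n1 n3 i + 1"

definition inblock :: "nat \<Rightarrow> nat \<Rightarrow> nat \<Rightarrow> nat \<Rightarrow> bool" where
  "inblock n1 n3 i c \<longleftrightarrow>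
     1 \<le> i \<and> i \<le> n1 \<and> Lsum n1 n3 i < c \<and> c \<le> Lsum n1 n3 i + ell n1 n3 i"

definition succ1 :: "nat \<Rightarrow> nat \<Rightarrow> nat" where
  "succ1 n1 i = (if i = n1 then 1 else i + 1)"

definition fpar :: "nat \<Rightarrow> nat" where
  "fpar n2 = (n2 - 1) div 2"

definition kcount :: "nat \<Rightarrow> nat \<Rightarrow> nat \<Rightarrow> nat" where
  "kcount n1 n2 n3 = card {i \<in> {1..n1}. ell n1 n3 i > fpar n2}"

definition Sneutral :: "nat \<Rightarrow> nat \<Rightarrow> nat \<Rightarrow> nat set" where
  "Sneutral n1 n2 n3 =
     (if kcount n1 n2 n3 \<ge> 2
      then {sstart n1 n3 i | i. 1 \<le> i \<and> i \<le> n1 \<and> ell n1 n3 i > fpar n2}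
      else {1})"

definition rank_out :: "nat set \<Rightarrow> nat \<Rightarrow> nat" where
  "rank_out X c = card {c' \<in> {1..c}. c' \<notin> X}"

definition yL :: "nat \<Rightarrow> nat \<Rightarrow> nat \<Rightarrow> nat \<Rightarrow> nat" where
  "yL n1 n2 n3 c =
     (if even n2 then (c - 1) mod (n2 div 2) + 1
      else (let S = Sneutral n1 n2 n3; f = fpar n2 in
            if c \<in> S then n2 else (rank_out S c - 1) mod f + 1))"

definition yR :: "nat \<Rightarrow> nat \<Rightarrow> nat \<Rightarrow> nat \<Rightarrow> nat" where
  "yR n1 n2 n3 c =
     (if even n2 then n2 div 2 + (c - 1) mod (n2 div 2) + 1
      else (let S1 = (\<lambda>s. s + 1) ` Sneutral n1 n2 n3; f = fpar n2 in
            if c \<in> S1 then n2 else f + (rank_out S1 c - 1) mod f + 1))"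

definition WLeft :: "nat \<Rightarrow> nat \<Rightarrow> nat \<Rightarrow> vtx set" where
  "WLeft n1 n2 n3 =
     {(i, yL n1 n2 n3 c, c) | i c. c \<in> {1..n3} \<and> inblock n1 n3 i c}"

definition WRight :: "nat \<Rightarrow> nat \<Rightarrow> nat \<Rightarrow> vtx set" where
  "WRight n1 n2 n3 =
     {(succ1 n1 i, yR n1 n2 n3 c, c) | i c. c \<in> {1..n3} \<and> inblock n1 n3 i c}"

definition middle_cone :: "nat \<Rightarrow> nat \<Rightarrow> nat \<Rightarrow> vtx set \<Rightarrow> bool" where
  "middle_cone n1 n2 n3 W \<longleftrightarrow>
     (even n2 \<and> W = WLeft n1 n2 n3 \<union> WRight n1 n2 n3) \<or>
     (odd n2 \<and> kcount n1 n2 n3 \<ge> 2 \<and> W = WLeft n1 n2 n3 \<union> WRight n1 n2 n3) \<or>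
     (odd n2 \<and> kcount n1 n2 n3 \<le> 1 \<and>
       (\<exists>x z. (x, 1, z) \<in> WLeft n1 n2 n3 \<and> x \<notin> {1, 2, n1} \<and>
          W = ((WLeft n1 n2 n3 - {(x, 1, z)}) \<union> {(x, n2, z)}) \<union> WRight n1 n2 n3))"

end

theory Submission
  imports Defs
begin

lemma ell_bounds:
  "n3 div n1 \<le> ell n1 n3 i" "ell n1 n3 i \<le> n3 div n1 + 1"
  unfolding ell_def Let_def by auto

lemma Lsum_Suc: "Lsum n1 n3 (Suc (Suc m)) = Lsum n1 n3 (Suc m) + ell n1 n3 (Suc m)"
  unfolding Lsum_def by (simp add: sum.atLeastLessThan_Suc)

lemma Lsum_1[simp]: "Lsum n1 n3 (Suc 0) = 0"
  unfolding Lsum_def by simp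

definition Ecnt :: "nat \<Rightarrow> nat \<Rightarrow> nat \<Rightarrow> nat" where
  "Ecnt n1 r m = (if r \<le> n1 - r then (min m (2*r) + 1) div 2
     else (if m \<le> 2*(n1-r) then (m+1) div 2 else m - (n1 - r)))"

lemma Lsum_closed:
  "Lsum n1 n3 (Suc m) = m * (n3 div n1) + Ecnt n1 (n3 mod n1) m"
proof (induction m)
  case 0 then show ?case by (simp add: Ecnt_def)
next
  case (Suc m)
  define q where "q = n3 div n1"
  define r where "r = n3 mod n1"
  have e: "ell n1 n3 (Suc m) = (if r \<le> n1 - r then (if Suc m \<le> 2 * r \<and> odd (Suc m) then q + 1 else q)
      else (if Suc m \<le> 2 * (n1 - r) then (if odd (Suc m) then q + 1 else q) else q + 1))"
    unfolding ell_def Let_def q_def r_def by simp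
  have "Ecnt n1 r (Suc m) = Ecnt n1 r m + (if r \<le> n1 - r then (if Suc m \<le> 2 * r \<and> odd (Suc m) then 1 else 0)
      else (if Suc m \<le> 2 * (n1 - r) then (if odd (Suc m) then 1 else 0) else 1))"
    unfolding Ecnt_def by (auto simp: min_def elim!: oddE evenE)
  then show ?case using Suc Lsum_Suc[of n1 n3 m] e unfolding q_def[symmetric] r_def[symmetric]
    by (auto split: if_splits)
qed

locale mc =
  fixes n1 n2 n3 :: nat
  assumes h1: "3 \<le> n1" and h2: "3 \<le> n2" and h3: "n1 \<le> n3" and h4: "n2 \<le> n3"
    and h5: "3 * max n1 n2 \<le> 2 * n3" and h6: "2 * n3 \<le> n1 * n2"
begin

abbreviation "q \<equiv> n3 div n1"
abbreviation "r \<equiv> n3 mod n1"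
abbreviation "L \<equiv> Lsum n1 n3"
abbreviation "el \<equiv> ell n1 n3"

lemma q_pos: "q \<ge> 1"
  using h1 h3 by (simp add: div_greater_zero_iff Suc_le_eq)

lemma el_pos: "el i \<ge> 1"
  using ell_bounds(1)[of n3 n1 i] q_pos by linarith

lemma n3_eq: "n3 = n1 * q + r" by simp

lemma r_lt: "r < n1" using h1 by simp

lemma L_total: "L (Suc n1) = n3"
proof -
  have "Ecnt n1 r n1 = r" unfolding Ecnt_def using r_lt by (auto simp: min_def)
  then show ?thesis using Lsum_closed[of n1 n3 n1] by (simp add: mult.commute)
qed

lemma L_mono: "i \<le> j \<Longrightarrow> L i \<le> L j"
  unfolding Lsum_def by (rule sum_mono2) auto

lemma L_step: "1 \<le> i \<Longrightarrow> L (Suc i) = L i + el i"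
  using Lsum_Suc[of n1 n3 "i - 1"] by (cases i) auto

lemma L_1: "L 1 = 0" using Lsum_1 by simp

lemma block_end: "1 \<le> i \<Longrightarrow> i \<le> n1 \<Longrightarrow> L i + el i \<le> n3"
  using L_step[of i] L_mono[of "Suc i" "Suc n1"] L_total by simp

lemma block_ex_aux: "m \<le> n1 \<Longrightarrow> 0 < c \<Longrightarrow> c \<le> L (Suc m) \<Longrightarrow> \<exists>i. inblock n1 n3 i c \<and> i \<le> m"
proof (induction m)
  case 0 then show ?case by simp
next
  case (Suc m)
  show ?case
  proof (cases "c \<le> L (Suc m)")
    case True then show ?thesis using Suc by force
  next
    case False then show ?thesis using Suc.prems L_step[of "Suc m"]
      unfolding inblock_def by (intro exI[of _ "Suc m"]) auto
  qed
qed

lemma block_ex: "1 \<le> c \<Longrightarrow> c \<le> n3 \<Longrightarrow> \<exists>i. inblock n1 n3 i c"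
  using block_ex_aux[of n1 c] L_total by auto

lemma block_uniq: "inblock n1 n3 i c \<Longrightarrow> inblock n1 n3 j c \<Longrightarrow> i = j"
proof (rule ccontr)
  assume a: "inblock n1 n3 i c" "inblock n1 n3 j c" "i \<noteq> j"
  { fix i j assume a: "inblock n1 n3 i c" "inblock n1 n3 j c" "i < j"
    have "L (Suc i) \<le> L j" using a by (intro L_mono) auto
    then have False using a L_step[of i] unfolding inblock_def by auto }
  then show False using a by (metis nat_neq_iff)
qed

definition blk :: "nat \<Rightarrow> nat" where "blk c = (THE i. inblock n1 n3 i c)"

lemma blk_in: "1 \<le> c \<Longrightarrow> c \<le> n3 \<Longrightarrow> inblock n1 n3 (blk c) c"
  unfolding blk_def using block_ex block_uniq by (metis theI)

lemma blk_eq: "inblock n1 n3 i c \<Longrightarrow> blk c = i"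
  unfolding blk_def using block_uniq by blast

lemma blk_range: "1 \<le> c \<Longrightarrow> c \<le> n3 \<Longrightarrow> 1 \<le> blk c \<and> blk c \<le> n1"
  using blk_in unfolding inblock_def by blast

lemma inblock_range: "inblock n1 n3 i c \<Longrightarrow> 1 \<le> c \<and> c \<le> n3"
  using block_end[of i] unfolding inblock_def by fastforce

lemma WLeft_eq: "WLeft n1 n2 n3 = (\<lambda>c. (blk c, yL n1 n2 n3 c, c)) ` {1..n3}"
  unfolding WLeft_def using blk_in blk_eq by force

lemma WRight_eq: "WRight n1 n2 n3 = (\<lambda>c. (succ1 n1 (blk c), yR n1 n2 n3 c, c)) ` {1..n3}"
  unfolding WRight_def using blk_in blk_eq by force

end

context mc begin

lemma q1_odd: assumes "q = 1" "odd i" "i \<le> n1" shows "el i = 2"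
proof -
  have "n3 = n1 + r" using n3_eq assms(1) by simp
  then have "n1 \<le> 2 * r" using h5 by simp
  have e: "el i = (if r \<le> n1 - r then (if i \<le> 2 * r \<and> odd i then q + 1 else q)
      else (if i \<le> 2 * (n1 - r) then (if odd i then q + 1 else q) else q + 1))"
    unfolding ell_def Let_def by simp
  show ?thesis
  proof (cases "r \<le> n1 - r")
    case True then have "i \<le> 2 * r" using \<open>n1 \<le> 2 * r\<close> assms by linarith
    then show ?thesis using e True assms by simp
  next
    case False then show ?thesis using e assms by simp
  qed
qed

definition pred1 :: "nat \<Rightarrow> nat" where "pred1 a = (if a = 1 then n1 else a - 1)"

lemma pred1_range: "1 \<le> a \<Longrightarrow> a \<le> n1 \<Longrightarrow> 1 \<le> pred1 a \<and> pred1 a \<le> n1 \<and> pred1 a \<noteq> a"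
  unfolding pred1_def using h1 by auto

lemma succ1_pred1: "1 \<le> a \<Longrightarrow> a \<le> n1 \<Longrightarrow> 1 \<le> i \<Longrightarrow> i \<le> n1 \<Longrightarrow> (succ1 n1 i = a) = (i = pred1 a)"
  unfolding succ1_def pred1_def using h1 by auto

lemma succ1_range: "1 \<le> i \<Longrightarrow> i \<le> n1 \<Longrightarrow> 1 \<le> succ1 n1 i \<and> succ1 n1 i \<le> n1 \<and> succ1 n1 i \<noteq> i"
  unfolding succ1_def using h1 by auto

lemma adj3: assumes "1 \<le> a" "a \<le> n1" shows "el a + el (pred1 a) \<ge> 3"
proof (cases "q = 1")
  case True
  show ?thesis
  proof (cases "odd a")
    case True then show ?thesis using q1_odd[OF \<open>q=1\<close>] assms el_pos[of "pred1 a"] by simp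
  next
    case False
    then have "pred1 a = a - 1" "odd (a - 1)" using assms unfolding pred1_def by auto
    then show ?thesis using q1_odd[OF \<open>q=1\<close>, of "a - 1"] assms el_pos[of a] by simp
  qed
next
  case False then have "q \<ge> 2" using q_pos by simp
  then show ?thesis using ell_bounds(1)[of n3 n1 a] ell_bounds(1)[of n3 n1 "pred1 a"] by simp
qed

definition gen :: "(nat \<Rightarrow> nat) \<Rightarrow> (nat \<Rightarrow> nat) \<Rightarrow> vtx set" where
  "gen YL YR = (\<lambda>c. (blk c, YL c, c)) ` {1..n3} \<union> (\<lambda>c. (succ1 n1 (blk c), YR c, c)) ` {1..n3}"

lemma gen_finite: "finite (gen YL YR)" unfolding gen_def by simp

lemma gen_sub: assumes "\<And>c. 1 \<le> c \<Longrightarrow> c \<le> n3 \<Longrightarrow> 1 \<le> YL c \<and> YL c \<le> n2 \<and> 1 \<le> YR c \<and> YR c \<le> n2"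
  shows "gen YL YR \<subseteq> vertices n1 n2 n3"
  unfolding gen_def vertices_def using assms blk_range succ1_range by fastforce

lemma slice3: assumes "slice (gen YL YR) 3 a \<noteq> {}"
  shows "card (slice (gen YL YR) 3 a) = 2"
proof -
  have a: "1 \<le> a" "a \<le> n3" using assms unfolding slice_def gen_def coord_def by auto
  have "slice (gen YL YR) 3 a = {(blk a, YL a, a), (succ1 n1 (blk a), YR a, a)}"
    unfolding slice_def gen_def coord_def using a by auto
  moreover have "blk a \<noteq> succ1 n1 (blk a)" using succ1_range blk_range a by metis
  ultimately show ?thesis by simp
qed

lemma slice1: assumes "slice (gen YL YR) 1 a \<noteq> {}"
  shows "card (slice (gen YL YR) 1 a) \<ge> 3"
proof -
  let ?S = "slice (gen YL YR) 1 a"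
  obtain c where c: "c \<in> {1..n3}" "blk c = a \<or> succ1 n1 (blk c) = a"
    using assms unfolding slice_def gen_def coord_def by auto
  have a: "1 \<le> a" "a \<le> n1" using c succ1_range[of "blk c"] blk_range[of c] by auto
  have finS: "finite ?S" by (rule finite_subset[OF _ gen_finite]) (auto simp: slice_def)
  define p where "p = pred1 a"
  have p: "1 \<le> p" "p \<le> n1" "p \<noteq> a" using pred1_range a p_def by auto
  have I1: "{L a <.. L a + el a} \<subseteq> (\<lambda>w. snd (snd w)) ` ?S"
  proof
    fix c assume c: "c \<in> {L a <.. L a + el a}"
    then have ib: "inblock n1 n3 a c" unfolding inblock_def using a by auto
    then have "blk c = a" by (rule blk_eq)
    then have "(blk c, YL c, c) \<in> ?S" using inblock_range[OF ib]
      unfolding slice_def gen_def coord_def by auto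
    then show "c \<in> (\<lambda>w. snd (snd w)) ` ?S" by force
  qed
  have I2: "{L p <.. L p + el p} \<subseteq> (\<lambda>w. snd (snd w)) ` ?S"
  proof
    fix c assume c: "c \<in> {L p <.. L p + el p}"
    then have ib: "inblock n1 n3 p c" unfolding inblock_def using p by auto
    then have "blk c = p" by (rule blk_eq)
    then have "succ1 n1 (blk c) = a" using succ1_pred1 p a p_def by auto
    then have "(succ1 n1 (blk c), YR c, c) \<in> ?S" using inblock_range[OF ib]
      unfolding slice_def gen_def coord_def by auto
    then show "c \<in> (\<lambda>w. snd (snd w)) ` ?S" by force
  qed
  have disj: "{L a <.. L a + el a} \<inter> {L p <.. L p + el p} = {}"
  proof (rule ccontr)
    assume "\<not> ?thesis"
    then obtain c where "c \<in> {L a <.. L a + el a}" "c \<in> {L p <.. L p + el p}" by blast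
    then have "inblock n1 n3 a c" "inblock n1 n3 p c" unfolding inblock_def using a p by auto
    then show False using block_uniq p by blast
  qed
  have "3 \<le> el a + el p" using adj3 a p_def by simp
  also have "\<dots> = card ({L a <.. L a + el a} \<union> {L p <.. L p + el p})"
    using disj by (simp add: card_Un_disjoint)
  also have "\<dots> \<le> card ((\<lambda>w. snd (snd w)) ` ?S)"
    using I1 I2 finS by (intro card_mono) auto
  also have "\<dots> \<le> card ?S" using finS by (rule card_image_le)
  finally show ?thesis .
qed

lemma slice2: "card (slice (gen YL YR) 2 b) = card {c \<in> {1..n3}. YL c = b} + card {c \<in> {1..n3}. YR c = b}"
proof -
  let ?A = "{c \<in> {1..n3}. YL c = b}" and ?B = "{c \<in> {1..n3}. YR c = b}"
  have e: "slice (gen YL YR) 2 b = (\<lambda>c. (blk c, YL c, c)) ` ?A \<union> (\<lambda>c. (succ1 n1 (blk c), YR c, c)) ` ?B"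
    unfolding slice_def gen_def coord_def by auto
  have d: "(\<lambda>c. (blk c, YL c, c)) ` ?A \<inter> (\<lambda>c. (succ1 n1 (blk c), YR c, c)) ` ?B = {}"
  proof -
    have ne: "succ1 n1 (blk c) \<noteq> blk c" if "c \<in> {1..n3}" for c
      using succ1_range[of "blk c"] blk_range[of c] that by auto
    show ?thesis
    proof (rule equals0I)
      fix w assume "w \<in> (\<lambda>c. (blk c, YL c, c)) ` ?A \<inter> (\<lambda>c. (succ1 n1 (blk c), YR c, c)) ` ?B"
      then obtain c c' where "c \<in> ?A" "c' \<in> ?B" "(blk c, YL c, c) = (succ1 n1 (blk c'), YR c', c')" by blast
      then show False using ne[of c] by auto
    qed
  qed
  have i1: "inj_on (\<lambda>c. (blk c, YL c, c)) ?A" by (rule inj_onI) auto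
  have i2: "inj_on (\<lambda>c. (succ1 n1 (blk c), YR c, c)) ?B" by (rule inj_onI) auto
  have c1: "card ((\<lambda>c. (blk c, YL c, c)) ` ?A) = card ?A" by (rule card_image[OF i1])
  have c2: "card ((\<lambda>c. (succ1 n1 (blk c), YR c, c)) ` ?B) = card ?B" by (rule card_image[OF i2])
  have "card ((\<lambda>c. (blk c, YL c, c)) ` ?A \<union> (\<lambda>c. (succ1 n1 (blk c), YR c, c)) ` ?B)
     = card ((\<lambda>c. (blk c, YL c, c)) ` ?A) + card ((\<lambda>c. (succ1 n1 (blk c), YR c, c)) ` ?B)"
    by (rule card_Un_disjoint[OF _ _ d]) auto
  then show ?thesis unfolding e c1 c2 .
qed

lemma gen_main:
  assumes rng: "\<And>c. 1 \<le> c \<Longrightarrow> c \<le> n3 \<Longrightarrow> 1 \<le> YL c \<and> YL c \<le> n2 \<and> 1 \<le> YR c \<and> YR c \<le> n2"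
    and two: "\<And>b. slice (gen YL YR) 2 b \<noteq> {} \<Longrightarrow> card {c \<in> {1..n3}. YL c = b} + card {c \<in> {1..n3}. YR c = b} \<ge> 3"
  shows "gen YL YR \<subseteq> vertices n1 n2 n3 \<and>
            (\<forall>(col, e) \<in> landmark_hyperedges (gen YL YR).
               (col = 3 \<longrightarrow> card e = 2) \<and>
               (col \<in> {1, 2} \<longrightarrow> finite e \<and> card e \<ge> 3))"
proof -
  have fin: "finite (slice (gen YL YR) i a)" for i a
    by (rule finite_subset[OF _ gen_finite]) (auto simp: slice_def)
  have *: "(col = 3 \<longrightarrow> card e = 2) \<and> (col \<in> {1, 2} \<longrightarrow> finite e \<and> card e \<ge> 3)"
    if "(col, e) \<in> landmark_hyperedges (gen YL YR)" for col e
  proof -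
    from that obtain a where e: "e = slice (gen YL YR) col a" "col \<in> {1,2,3}" "e \<noteq> {}"
      unfolding landmark_hyperedges_def by auto
    then consider "col = 1" | "col = 2" | "col = 3" by blast
    then show ?thesis
    proof cases
      case 1 then show ?thesis using slice1[of YL YR a] e fin by simp
    next
      case 2 then show ?thesis using slice2[of YL YR a] two[of a] e fin by simp
    next
      case 3 then show ?thesis using slice3[of YL YR a] e by simp
    qed
  qed
  have "\<forall>(col, e) \<in> landmark_hyperedges (gen YL YR).
               (col = 3 \<longrightarrow> card e = 2) \<and>
               (col \<in> {1, 2} \<longrightarrow> finite e \<and> card e \<ge> 3)"
    using * by blast
  with gen_sub[OF rng] show ?thesis by (rule conjI)
qed

end

lemma rank_out_0: "rank_out X 0 = 0" unfolding rank_out_def by simp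

lemma rank_out_Suc: "rank_out X (Suc N) = rank_out X N + (if Suc N \<in> X then 0 else 1)"
proof -
  have "{c' \<in> {1..Suc N}. c' \<notin> X} = {c' \<in> {1..N}. c' \<notin> X} \<union> (if Suc N \<in> X then {} else {Suc N})"
    by (auto simp: le_Suc_eq)
  then show ?thesis unfolding rank_out_def by (simp add: card_insert_if)
qed

lemma rank_ivt: "1 \<le> m \<Longrightarrow> m \<le> rank_out X N \<Longrightarrow> \<exists>c. 1 \<le> c \<and> c \<le> N \<and> c \<notin> X \<and> rank_out X c = m"
proof (induction N)
  case 0 then show ?case by (simp add: rank_out_0)
next
  case (Suc N)
  show ?case
  proof (cases "m \<le> rank_out X N")
    case True then show ?thesis using Suc by (meson le_SucI)
  next
    case False then show ?thesis using Suc.prems rank_out_Suc[of X N]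
      by (intro exI[of _ "Suc N"]) (auto split: if_splits)
  qed
qed

lemma rank_lower: "finite X \<Longrightarrow> N - card X \<le> rank_out X N"
proof -
  assume "finite X"
  have "{c' \<in> {1..N}. c' \<notin> X} = {1..N} - X" by auto
  then have "rank_out X N = card ({1..N} - X)" unfolding rank_out_def by simp
  moreover have "card {1..N} - card X \<le> card ({1..N} - X)" by (rule diff_card_le_card_Diff) fact
  ultimately show ?thesis by simp
qed

lemma rank_count:
  assumes fin: "finite X" and f: "1 \<le> f" and b: "1 \<le> b" "b \<le> f"
    and bound: "b + (t - 1) * f \<le> N - card X" and t: "1 \<le> t"
    and Y: "\<And>c. 1 \<le> c \<Longrightarrow> c \<le> N \<Longrightarrow> c \<notin> X \<Longrightarrow> Y c = off + (rank_out X c - 1) mod f + 1"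
  shows "t \<le> card {c \<in> {1..N}. Y c = off + b}"
proof -
  let ?M = "(\<lambda>j. b + j * f) ` {..<t}"
  let ?A = "{c \<in> {1..N}. c \<notin> X \<and> rank_out X c \<in> ?M}"
  have "inj_on (\<lambda>j. b + j * f) {..<t}" using f by (intro inj_onI) simp
  then have cM: "card ?M = t" by (simp add: card_image)
  have "?M \<subseteq> rank_out X ` ?A"
  proof
    fix m assume m: "m \<in> ?M"
    then obtain j where j: "j < t" "m = b + j * f" by auto
    have "j \<le> t - 1" using j by simp
    then have "j * f \<le> (t - 1) * f" by (rule mult_le_mono1)
    then have "m \<le> b + (t - 1) * f" using j by simp
    then have "m \<le> rank_out X N" using bound rank_lower[OF fin, of N] by linarith
    moreover have "1 \<le> m" using j b by simp
    ultimately obtain c where "1 \<le> c" "c \<le> N" "c \<notin> X" "rank_out X c = m" using rank_ivt by blast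
    then show "m \<in> rank_out X ` ?A" using m by (intro image_eqI[of _ _ c]) auto
  qed
  moreover have "finite (rank_out X ` ?A)" by simp
  ultimately have "t \<le> card (rank_out X ` ?A)" using cM card_mono[of "rank_out X ` ?A" ?M] by simp
  also have "\<dots> \<le> card ?A" by (rule card_image_le) simp
  also have "\<dots> \<le> card {c \<in> {1..N}. Y c = off + b}"
  proof (rule card_mono)
    show "?A \<subseteq> {c \<in> {1..N}. Y c = off + b}"
    proof
      fix c assume c: "c \<in> ?A"
      then obtain j where j: "rank_out X c = b + j * f" by auto
      have "b - 1 < f" using b by simp
      then have "(b - 1 + j * f) mod f = b - 1" by (simp only: mod_mult_self1 mod_less)
      moreover have "rank_out X c - 1 = (b - 1) + j * f" using b j by simp
      ultimately have "(rank_out X c - 1) mod f = b - 1" using j b by simp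
      then show "c \<in> {c \<in> {1..N}. Y c = off + b}" using Y[of c] c b by auto
    qed
  qed simp
  finally show ?thesis .
qed

context mc begin

lemma slice2_ne: "slice (gen YL YR) 2 b \<noteq> {} \<Longrightarrow> \<exists>c. 1 \<le> c \<and> c \<le> n3 \<and> (YL c = b \<or> YR c = b)"
  unfolding slice_def gen_def coord_def by auto

lemma rank_empty: "rank_out {} c = c"
proof -
  have "{c' \<in> {1..c}. c' \<notin> {}} = {1..c}" by auto
  then show ?thesis unfolding rank_out_def by simp
qed

lemma W_gen: "WLeft n1 n2 n3 \<union> WRight n1 n2 n3 = gen (yL n1 n2 n3) (yR n1 n2 n3)"
  unfolding WLeft_eq WRight_eq gen_def ..

lemma even_case:
  assumes ev: "even n2"
  shows "gen (yL n1 n2 n3) (yR n1 n2 n3) \<subseteq> vertices n1 n2 n3 \<and>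
            (\<forall>(col, e) \<in> landmark_hyperedges (gen (yL n1 n2 n3) (yR n1 n2 n3)).
               (col = 3 \<longrightarrow> card e = 2) \<and>
               (col \<in> {1, 2} \<longrightarrow> finite e \<and> card e \<ge> 3))"
proof -
  define h where "h = n2 div 2"
  have h: "n2 = 2 * h" "1 \<le> h" "3 * h \<le> n3" using ev h2 h5 unfolding h_def by auto
  have yl: "yL n1 n2 n3 c = 0 + (rank_out {} c - 1) mod h + 1" for c
    unfolding yL_def h_def rank_empty using ev by simp
  have yr: "yR n1 n2 n3 c = h + (rank_out {} c - 1) mod h + 1" for c
    unfolding yR_def h_def rank_empty using ev by simp
  have hp: "0 < h" using h by simp
  have ml: "(rank_out {} c - 1) mod h < h" for c using hp by simp
  show ?thesis
  proof (rule gen_main)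
    fix c show "1 \<le> yL n1 n2 n3 c \<and> yL n1 n2 n3 c \<le> n2 \<and> 1 \<le> yR n1 n2 n3 c \<and> yR n1 n2 n3 c \<le> n2"
      unfolding yl yr using ml[of c] h(1) by (intro conjI; linarith)
  next
    fix b assume "slice (gen (yL n1 n2 n3) (yR n1 n2 n3)) 2 b \<noteq> {}"
    then obtain c where c: "1 \<le> c" "c \<le> n3" "yL n1 n2 n3 c = b \<or> yR n1 n2 n3 c = b"
      using slice2_ne by blast
    show "3 \<le> card {c \<in> {1..n3}. yL n1 n2 n3 c = b} + card {c \<in> {1..n3}. yR n1 n2 n3 c = b}"
    proof (cases "yL n1 n2 n3 c = b")
      case True
      define b' where "b' = (rank_out {} c - 1) mod h + 1"
      have b': "1 \<le> b'" "b' \<le> h" "b = 0 + b'" using True ml[of c] unfolding b'_def yl by linarith+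
      have "3 \<le> card {c \<in> {1..n3}. yL n1 n2 n3 c = 0 + b'}"
        by (rule rank_count[where X = "{}" and f = h]) (use b' h yl in auto)
      then show ?thesis using b' by simp
    next
      case False
      then have F: "yR n1 n2 n3 c = b" using c by simp
      define b' where "b' = (rank_out {} c - 1) mod h + 1"
      have b': "1 \<le> b'" "b' \<le> h" "b = h + b'" using F ml[of c] unfolding b'_def yr by linarith+
      have "3 \<le> card {c \<in> {1..n3}. yR n1 n2 n3 c = h + b'}"
        by (rule rank_count[where X = "{}" and f = h]) (use b' h yr in auto)
      then show ?thesis using b' by simp
    qed
  qed
qed

end

context mc begin

abbreviation "ff \<equiv> fpar n2"
definition PP :: "nat set" where "PP = {i \<in> {1..n1}. el i > ff}"
abbreviation "SN \<equiv> Sneutral n1 n2 n3"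

lemma kc_eq: "kcount n1 n2 n3 = card PP" unfolding kcount_def PP_def ..

lemma odd_basic:
  assumes "odd n2"
  shows "n2 = 2 * ff + 1" "1 \<le> ff" "3 * ff + 2 \<le> n3" "4 \<le> n1" "q \<le> ff"
proof -
  show n2: "n2 = 2 * ff + 1" using assms unfolding fpar_def by (auto elim!: oddE)
  then show "1 \<le> ff" using h2 by simp
  have "3 * n2 \<le> 2 * n3" using h5 by simp
  then show "3 * ff + 2 \<le> n3" using n2 by simp
  show "4 \<le> n1"
  proof (rule ccontr)
    assume "\<not> 4 \<le> n1" then have "n1 = 3" using h1 by simp
    then have "2 * n3 = 3 * n2" using h5 h6 by simp
    then show False using n2 by presburger
  qed
  have a: "n1 * q \<le> n3" by (simp add: mult.commute)
  have "n1 * (2 * q) = 2 * (n1 * q)" by simp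
  also have "\<dots> \<le> 2 * n3" using a by simp
  also have "\<dots> \<le> n1 * n2" by (rule h6)
  also have "\<dots> = n1 * (2 * ff + 1)" using n2 by simp
  finally have "n1 * (2 * q) \<le> n1 * (2 * ff + 1)" .
  then have "2 * q \<le> 2 * ff + 1" using h1 by (subst (asm) mult_le_cancel1) simp
  then show "q \<le> ff" by simp
qed

lemma SN_finite: "finite SN"
  unfolding Sneutral_def by auto

lemma yL_in: "odd n2 \<Longrightarrow> c \<in> SN \<Longrightarrow> yL n1 n2 n3 c = n2"
  unfolding yL_def by simp
lemma yL_out: "odd n2 \<Longrightarrow> c \<notin> SN \<Longrightarrow> yL n1 n2 n3 c = 0 + (rank_out SN c - 1) mod ff + 1"
  unfolding yL_def by (simp add: Let_def)
lemma yR_in: "odd n2 \<Longrightarrow> c \<in> (\<lambda>s. s + 1) ` SN \<Longrightarrow> yR n1 n2 n3 c = n2"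
  unfolding yR_def by simp
lemma yR_out: "odd n2 \<Longrightarrow> c \<notin> (\<lambda>s. s + 1) ` SN \<Longrightarrow> yR n1 n2 n3 c = ff + (rank_out ((\<lambda>s. s + 1) ` SN) c - 1) mod ff + 1"
  unfolding yR_def by (simp add: Let_def)

lemma yL_cases: assumes "odd n2" shows "yL n1 n2 n3 c = n2 \<or> (1 \<le> yL n1 n2 n3 c \<and> yL n1 n2 n3 c \<le> ff)"
proof (cases "c \<in> SN")
  case True then show ?thesis using yL_in assms by simp
next
  case False
  have "(rank_out SN c - 1) mod ff < ff" using odd_basic(2)[OF assms] by simp
  then show ?thesis using yL_out[OF assms False] by linarith
qed

lemma yR_cases: assumes "odd n2" shows "yR n1 n2 n3 c = n2 \<or> (ff + 1 \<le> yR n1 n2 n3 c \<and> yR n1 n2 n3 c \<le> 2 * ff)"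
proof (cases "c \<in> (\<lambda>s. s + 1) ` SN")
  case True then show ?thesis using yR_in assms by simp
next
  case False
  have "(rank_out ((\<lambda>s. s + 1) ` SN) c - 1) mod ff < ff" using odd_basic(2)[OF assms] by simp
  then show ?thesis using yR_out[OF assms False] by linarith
qed

lemma left_count:
  assumes "odd n2" "1 \<le> b" "b \<le> ff" "1 \<le> t" "b + (t - 1) * ff \<le> n3 - card SN"
  shows "t \<le> card {c \<in> {1..n3}. yL n1 n2 n3 c = b}"
  using rank_count[where X = SN and f = ff and b = b and t = t and N = n3 and off = 0 and Y = "yL n1 n2 n3"]
    assms SN_finite odd_basic(2)[OF assms(1)] yL_out[OF assms(1)] by simp

lemma right_count:
  assumes "odd n2" "1 \<le> b" "b \<le> ff" "1 \<le> t" "b + (t - 1) * ff \<le> n3 - card SN"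
  shows "t \<le> card {c \<in> {1..n3}. yR n1 n2 n3 c = ff + b}"
proof -
  have "card ((\<lambda>s. s + 1) ` SN) \<le> card SN" by (rule card_image_le[OF SN_finite])
  then have "b + (t - 1) * ff \<le> n3 - card ((\<lambda>s. s + 1) ` SN)" using assms(5) by linarith
  then show ?thesis
    using rank_count[where X = "(\<lambda>s. s + 1) ` SN" and f = ff and b = b and t = t and N = n3 and off = ff and Y = "yR n1 n2 n3"]
    assms SN_finite odd_basic(2)[OF assms(1)] yR_out[OF assms(1)] by simp
qed

lemma odd_rng: "odd n2 \<Longrightarrow> 1 \<le> yL n1 n2 n3 c \<and> yL n1 n2 n3 c \<le> n2 \<and> 1 \<le> yR n1 n2 n3 c \<and> yR n1 n2 n3 c \<le> n2"
  using yL_cases[of c] yR_cases[of c] odd_basic(1,2) by fastforce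

end

context mc begin

lemma sum_total: "(\<Sum>i\<in>{1..n1}. el i) = n3"
  using L_total unfolding Lsum_def by (simp add: atLeastLessThanSuc_atLeastAtMost)

lemma PP_sub: "PP \<subseteq> {1..n1}" unfolding PP_def by auto

lemma sum_ind: "(\<Sum>i\<in>{1..n1}. (if i \<in> PP then 1 else 0::nat)) = card PP"
proof -
  have "(\<Sum>i\<in>{1..n1}. (if i \<in> PP then 1 else 0::nat)) = card ({1..n1} \<inter> PP)"
    by (simp add: sum.If_cases Int_def)
  also have "{1..n1} \<inter> PP = PP" using PP_sub by blast
  finally show ?thesis .
qed

lemma big_case_bound:
  assumes "odd n2" "kcount n1 n2 n3 \<ge> 2"
  shows "card PP + 3 * ff \<le> n3" "ff \<le> q" "SN = sstart n1 n3 ` PP"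
proof -
  have "PP \<noteq> {}" using assms(2) kc_eq by auto
  then obtain i where "i \<in> PP" by blast
  then have "ff < el i" unfolding PP_def by simp
  then show qf: "ff \<le> q" using ell_bounds(2)[of n1 n3 i] by simp
  have "(\<Sum>i\<in>{1..n1}. (ff + (if i \<in> PP then 1 else 0::nat))) \<le> (\<Sum>i\<in>{1..n1}. el i)"
  proof (rule sum_mono)
    fix i assume i: "i \<in> {1..n1}"
    show "ff + (if i \<in> PP then 1 else 0) \<le> el i"
    proof (cases "i \<in> PP")
      case True then show ?thesis unfolding PP_def by simp
    next
      case False then show ?thesis using qf ell_bounds(1)[of n3 n1 i] by simp
    qed
  qed
  also have "\<dots> = n3" by (rule sum_total)
  finally have "n1 * ff + card PP \<le> n3" unfolding sum.distrib sum_ind by simp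
  moreover have "3 * ff \<le> n1 * ff" using h1 by simp
  ultimately show "card PP + 3 * ff \<le> n3" by linarith
  show "SN = sstart n1 n3 ` PP" unfolding Sneutral_def PP_def using assms(2) by auto
qed

lemma sstart_inj: "i \<in> PP \<Longrightarrow> j \<in> PP \<Longrightarrow> sstart n1 n3 i = sstart n1 n3 j \<Longrightarrow> i = j"
proof (rule ccontr)
  assume a: "i \<in> PP" "j \<in> PP" "sstart n1 n3 i = sstart n1 n3 j" "i \<noteq> j"
  { fix i j assume a: "i \<in> PP" "j \<in> PP" "L i = L j" "i < j"
    have "L (Suc i) \<le> L j" using a by (intro L_mono) auto
    moreover have "L (Suc i) = L i + el i" using a PP_sub by (intro L_step) auto
    ultimately have False using a el_pos[of i] by simp }
  then show False using a unfolding sstart_def by (metis add_right_cancel nat_neq_iff)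
qed

lemma sstart_range: assumes "odd n2" "i \<in> PP"
  shows "1 \<le> sstart n1 n3 i" "sstart n1 n3 i + 1 \<le> n3"
proof -
  have i: "1 \<le> i" "i \<le> n1" "ff < el i" using assms PP_sub unfolding PP_def by auto
  show "1 \<le> sstart n1 n3 i" unfolding sstart_def by simp
  have "1 \<le> ff" using odd_basic(2)[OF assms(1)] .
  then show "sstart n1 n3 i + 1 \<le> n3" using block_end[OF i(1,2)] i(3) unfolding sstart_def by linarith
qed

lemma big_case:
  assumes od: "odd n2" and k: "kcount n1 n2 n3 \<ge> 2"
  shows "gen (yL n1 n2 n3) (yR n1 n2 n3) \<subseteq> vertices n1 n2 n3 \<and>
            (\<forall>(col, e) \<in> landmark_hyperedges (gen (yL n1 n2 n3) (yR n1 n2 n3)).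
               (col = 3 \<longrightarrow> card e = 2) \<and>
               (col \<in> {1, 2} \<longrightarrow> finite e \<and> card e \<ge> 3))"
proof -
  note bb = big_case_bound[OF od k]
  have cS: "card SN \<le> card PP" unfolding bb(3) by (rule card_image_le) (rule finite_subset[OF PP_sub], simp)
  have bnd: "3 * ff \<le> n3 - card SN" using bb(1) cS by linarith
  have "2 \<le> card PP" using k kc_eq by simp
  have finP: "finite PP" using PP_sub finite_subset by blast
  obtain i where i: "i \<in> PP" using \<open>2 \<le> card PP\<close> by fastforce
  have "card (PP - {i}) \<ge> 1" using \<open>2 \<le> card PP\<close> i finP by simp
  then have "PP - {i} \<noteq> {}" by (intro notI) simp
  then obtain j where j: "j \<in> PP - {i}" by blast
  have ij: "i \<in> PP" "j \<in> PP" "i \<noteq> j" using i j by auto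
  have sne: "sstart n1 n3 i \<noteq> sstart n1 n3 j" using sstart_inj ij by blast
  have n2L: "2 \<le> card {c \<in> {1..n3}. yL n1 n2 n3 c = n2}"
  proof -
    have "{sstart n1 n3 i, sstart n1 n3 j} \<subseteq> {c \<in> {1..n3}. yL n1 n2 n3 c = n2}"
    proof -
      have "sstart n1 n3 i \<in> SN" "sstart n1 n3 j \<in> SN" using ij bb(3) by auto
      then show ?thesis using sstart_range[OF od ij(1)] sstart_range[OF od ij(2)] yL_in[OF od] by auto
    qed
    from card_mono[OF _ this] show ?thesis using sne by simp
  qed
  have n2R: "1 \<le> card {c \<in> {1..n3}. yR n1 n2 n3 c = n2}"
  proof -
    have "sstart n1 n3 i + 1 \<in> {c \<in> {1..n3}. yR n1 n2 n3 c = n2}"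
    proof -
      have "sstart n1 n3 i + 1 \<in> (\<lambda>s. s + 1) ` SN" using ij bb(3) by auto
      then show ?thesis using sstart_range[OF od ij(1)] yR_in[OF od] by auto
    qed
    then have "{c \<in> {1..n3}. yR n1 n2 n3 c = n2} \<noteq> {}" by blast
    then show ?thesis by (simp add: Suc_le_eq card_gt_0_iff)
  qed
  show ?thesis
  proof (rule gen_main)
    fix c show "1 \<le> yL n1 n2 n3 c \<and> yL n1 n2 n3 c \<le> n2 \<and> 1 \<le> yR n1 n2 n3 c \<and> yR n1 n2 n3 c \<le> n2"
      by (rule odd_rng[OF od])
  next
    fix b assume "slice (gen (yL n1 n2 n3) (yR n1 n2 n3)) 2 b \<noteq> {}"
    then obtain c where c: "1 \<le> c" "c \<le> n3" "yL n1 n2 n3 c = b \<or> yR n1 n2 n3 c = b"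
      using slice2_ne by blast
    show "3 \<le> card {c \<in> {1..n3}. yL n1 n2 n3 c = b} + card {c \<in> {1..n3}. yR n1 n2 n3 c = b}"
    proof (cases "b = n2")
      case True then show ?thesis using n2L n2R by simp
    next
      case False
      show ?thesis
      proof (cases "yL n1 n2 n3 c = b")
        case True
        then have b: "1 \<le> b" "b \<le> ff" using yL_cases[OF od, of c] False by auto
        have "3 \<le> card {c \<in> {1..n3}. yL n1 n2 n3 c = b}"
          by (rule left_count[OF od b]) (use bnd b in auto)
        then show ?thesis by simp
      next
        case F2: False
        then have "yR n1 n2 n3 c = b" using c by simp
        then have b: "ff + 1 \<le> b" "b \<le> 2 * ff" using yR_cases[OF od, of c] False by auto
        have "3 \<le> card {c \<in> {1..n3}. yR n1 n2 n3 c = ff + (b - ff)}"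
          by (rule right_count[OF od]) (use bnd b in auto)
        then show ?thesis using b by simp
      qed
    qed
  qed
qed

end

context mc begin

lemma small_SN: "kcount n1 n2 n3 \<le> 1 \<Longrightarrow> SN = {1}"
  unfolding Sneutral_def by simp

lemma finPP: "finite PP" using PP_sub finite_subset by blast

lemma small_ff: assumes od: "odd n2" and k: "kcount n1 n2 n3 \<le> 1" shows "2 \<le> ff"
proof (rule ccontr)
  assume "\<not> 2 \<le> ff"
  then have f1: "ff = 1" using odd_basic(2)[OF od] by simp
  then have "q = 1" using odd_basic(5)[OF od] q_pos by simp
  then have "el 1 = 2" "el 3 = 2" using q1_odd h1 by auto
  then have "{1, 3} \<subseteq> PP" unfolding PP_def using f1 h1 by auto
  then have "card {1, 3::nat} \<le> card PP" using finPP by (rule card_mono[rotated])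
  then show False using k kc_eq by simp
qed

lemma rank1: "1 \<le> c \<Longrightarrow> rank_out {1} c = c - 1"
proof -
  have "{c' \<in> {1..c}. c' \<notin> {1}} = {2..c}" by auto
  then show "rank_out {1} c = c - 1" unfolding rank_out_def by simp
qed

lemma L3: "L 3 = el 1 + el 2"
  using L_step[of 1] L_step[of 2] L_1 by (simp add: numeral_3_eq_3 numeral_2_eq_2)

lemma small_exists:
  assumes od: "odd n2" and k: "kcount n1 n2 n3 \<le> 1"
  shows "(blk (2 * ff + 2), 1, 2 * ff + 2) \<in> WLeft n1 n2 n3 \<and> blk (2 * ff + 2) \<notin> {1, 2, n1}"
proof -
  define z where "z = 2 * ff + 2"
  note ob = odd_basic[OF od]
  have f2: "2 \<le> ff" by (rule small_ff[OF od k])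
  have z: "1 \<le> z" "z \<le> n3" using ob unfolding z_def by auto
  have "z \<notin> SN" using small_SN[OF k] z_def by simp
  then have "yL n1 n2 n3 z = 0 + (rank_out SN z - 1) mod ff + 1" by (rule yL_out[OF od])
  also have "rank_out SN z - 1 = 0 + 2 * ff" using rank1[of z] small_SN[OF k] z_def by simp
  finally have yz: "yL n1 n2 n3 z = 1" by simp
  have mem: "(blk z, 1, z) \<in> WLeft n1 n2 n3" unfolding WLeft_eq using z yz by force
  have ib: "inblock n1 n3 (blk z) z" by (rule blk_in[OF z])
  have small12: "el 1 + el 2 \<le> 2 * ff + 1"
  proof (cases "q < ff")
    case True then show ?thesis using ell_bounds(2)[of n1 n3 1] ell_bounds(2)[of n1 n3 2] by simp
  next
    case False
    then have qf: "q = ff" using ob(5) by simp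
    have "\<not> (el 1 > ff \<and> el 2 > ff)"
    proof
      assume "el 1 > ff \<and> el 2 > ff"
      then have "{1, 2} \<subseteq> PP" unfolding PP_def using h1 by auto
      then have "card {1, 2::nat} \<le> card PP" using finPP by (rule card_mono[rotated])
      then show False using k kc_eq by simp
    qed
    then show ?thesis using ell_bounds(2)[of n1 n3 1] ell_bounds(2)[of n1 n3 2] qf by linarith
  qed
  have n1big: "2 * ff + 2 \<le> L n1"
  proof -
    have tot: "L n1 + el n1 = n3" using L_step[of n1] L_total h1 by simp
    show ?thesis
    proof (cases "q < ff")
      case True then show ?thesis using tot ob(3) ell_bounds(2)[of n1 n3 n1] by linarith
    next
      case False
      then have qf: "q = ff" using ob(5) by simp
      have "(\<Sum>i\<in>{1..<n1}. q) \<le> (\<Sum>i\<in>{1..<n1}. el i)"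
        by (rule sum_mono) (rule ell_bounds(1))
      then have "(n1 - 1) * q \<le> L n1" unfolding Lsum_def by simp
      moreover have "3 \<le> n1 - 1" using ob(4) by linarith
      then have "3 * q \<le> (n1 - 1) * q" by (rule mult_le_mono1)
      ultimately show ?thesis using qf f2 by linarith
    qed
  qed
  have "blk z \<noteq> 1 \<and> blk z \<noteq> 2"
  proof (rule ccontr)
    assume "\<not> ?thesis"
    then have "blk z \<le> 2" by auto
    then have "L (Suc (blk z)) \<le> L 3" by (intro L_mono) simp
    moreover have "L (Suc (blk z)) = L (blk z) + el (blk z)" using ib unfolding inblock_def by (intro L_step) simp
    ultimately show False using ib small12 L3 unfolding inblock_def z_def by linarith
  qed
  moreover have "blk z \<noteq> n1"
  proof
    assume "blk z = n1"
    then show False using ib n1big unfolding inblock_def z_def by simp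
  qed
  ultimately show ?thesis using mem unfolding z_def by simp
qed

end

context mc begin

lemma small_case:
  assumes od: "odd n2" and k: "kcount n1 n2 n3 \<le> 1" and mem: "(x, 1, z) \<in> WLeft n1 n2 n3"
  shows "gen ((yL n1 n2 n3)(z := n2)) (yR n1 n2 n3) \<subseteq> vertices n1 n2 n3 \<and>
            (\<forall>(col, e) \<in> landmark_hyperedges (gen ((yL n1 n2 n3)(z := n2)) (yR n1 n2 n3)).
               (col = 3 \<longrightarrow> card e = 2) \<and>
               (col \<in> {1, 2} \<longrightarrow> finite e \<and> card e \<ge> 3))"
proof -
  note ob = odd_basic[OF od]
  let ?YL = "(yL n1 n2 n3)(z := n2)"
  have z: "1 \<le> z" "z \<le> n3" "yL n1 n2 n3 z = 1" using mem unfolding WLeft_eq by auto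
  have SN: "SN = {1}" by (rule small_SN[OF k])
  have cS: "card SN = 1" using SN by simp
  have y1: "yL n1 n2 n3 1 = n2" using yL_in[OF od] SN by simp
  have z1: "z \<noteq> 1" using z y1 h2 by auto
  have "(2::nat) \<in> (\<lambda>s. s + 1) ` SN" using SN by simp
  then have y2: "yR n1 n2 n3 2 = n2" by (rule yR_in[OF od])
  have n2L: "2 \<le> card {c \<in> {1..n3}. ?YL c = n2}"
  proof -
    have "{1, z} \<subseteq> {c \<in> {1..n3}. ?YL c = n2}" using z z1 y1 h2 h4 by auto
    from card_mono[OF _ this] show ?thesis using z1 by simp
  qed
  have n2R: "1 \<le> card {c \<in> {1..n3}. yR n1 n2 n3 c = n2}"
  proof -
    have "2 \<in> {c \<in> {1..n3}. yR n1 n2 n3 c = n2}" using y2 h4 h2 by auto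
    then have "{c \<in> {1..n3}. yR n1 n2 n3 c = n2} \<noteq> {}" by blast
    then show ?thesis by (simp add: Suc_le_eq card_gt_0_iff)
  qed
  have bnd: "3 * ff \<le> n3 - card SN" using cS ob(3) by linarith
  show ?thesis
  proof (rule gen_main)
    fix c show "1 \<le> ?YL c \<and> ?YL c \<le> n2 \<and> 1 \<le> yR n1 n2 n3 c \<and> yR n1 n2 n3 c \<le> n2"
      using odd_rng[OF od, of c] h2 by auto
  next
    fix b assume "slice (gen ?YL (yR n1 n2 n3)) 2 b \<noteq> {}"
    then obtain c where c: "1 \<le> c" "c \<le> n3" "?YL c = b \<or> yR n1 n2 n3 c = b"
      using slice2_ne by blast
    show "3 \<le> card {c \<in> {1..n3}. ?YL c = b} + card {c \<in> {1..n3}. yR n1 n2 n3 c = b}"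
    proof (cases "b = n2")
      case True then show ?thesis using n2L n2R by simp
    next
      case False
      show ?thesis
      proof (cases "?YL c = b")
        case True
        then have cz: "c \<noteq> z" using False by auto
        then have "yL n1 n2 n3 c = b" using True by simp
        then have b: "1 \<le> b" "b \<le> ff" using yL_cases[OF od, of c] False by auto
        have sub: "{c \<in> {1..n3}. yL n1 n2 n3 c = b} - {z} \<subseteq> {c \<in> {1..n3}. ?YL c = b}" by auto
        have "3 \<le> card {c \<in> {1..n3}. ?YL c = b}"
        proof (cases "b = 1")
          case True
          have "4 \<le> card {c \<in> {1..n3}. yL n1 n2 n3 c = b}"
            by (rule left_count[OF od b]) (use bnd ob(3) cS True in auto)
          moreover have "card {c \<in> {1..n3}. yL n1 n2 n3 c = b} - card {z} \<le> card ({c \<in> {1..n3}. yL n1 n2 n3 c = b} - {z})"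
            by (rule diff_card_le_card_Diff) simp
          moreover have "card ({c \<in> {1..n3}. yL n1 n2 n3 c = b} - {z}) \<le> card {c \<in> {1..n3}. ?YL c = b}"
            by (rule card_mono[OF _ sub]) simp
          ultimately show ?thesis by simp
        next
          case b1: False
          have "3 \<le> card {c \<in> {1..n3}. yL n1 n2 n3 c = b}"
            by (rule left_count[OF od b]) (use bnd b in auto)
          moreover have "{c \<in> {1..n3}. yL n1 n2 n3 c = b} - {z} = {c \<in> {1..n3}. yL n1 n2 n3 c = b}"
            using z b1 by auto
          moreover have "card ({c \<in> {1..n3}. yL n1 n2 n3 c = b} - {z}) \<le> card {c \<in> {1..n3}. ?YL c = b}"
            by (rule card_mono[OF _ sub]) simp
          ultimately show ?thesis by simp
        qed
        then show ?thesis by simp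
      next
        case F2: False
        then have "yR n1 n2 n3 c = b" using c by simp
        then have b: "ff + 1 \<le> b" "b \<le> 2 * ff" using yR_cases[OF od, of c] False by auto
        have "3 \<le> card {c \<in> {1..n3}. yR n1 n2 n3 c = ff + (b - ff)}"
          by (rule right_count[OF od]) (use bnd b in auto)
        then show ?thesis using b by simp
      qed
    qed
  qed
qed

lemma small_W:
  assumes mem: "(x, 1, z) \<in> WLeft n1 n2 n3"
  shows "((WLeft n1 n2 n3 - {(x, 1, z)}) \<union> {(x, n2, z)}) \<union> WRight n1 n2 n3
     = gen ((yL n1 n2 n3)(z := n2)) (yR n1 n2 n3)"
proof -
  have z: "1 \<le> z" "z \<le> n3" "yL n1 n2 n3 z = 1" "x = blk z" using mem unfolding WLeft_eq by auto
  have "(WLeft n1 n2 n3 - {(x, 1, z)}) \<union> {(x, n2, z)} = (\<lambda>c. (blk c, ((yL n1 n2 n3)(z := n2)) c, c)) ` {1..n3}"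
    unfolding WLeft_eq using z by force
  then show ?thesis unfolding gen_def WRight_eq by simp
qed

end

theorem mainTheorem6:
  fixes n1 n2 n3 :: nat
  assumes "3 \<le> n1" and "3 \<le> n2" and "n1 \<le> n3" and "n2 \<le> n3"
    and "3 * max n1 n2 \<le> 2 * n3" and "2 * n3 \<le> n1 * n2"
  shows "(odd n2 \<and> kcount n1 n2 n3 \<le> 1 \<longrightarrow>
            (\<exists>x z. (x, 1, z) \<in> WLeft n1 n2 n3 \<and> x \<notin> {1, 2, n1}))
       \<and> (\<forall>W. middle_cone n1 n2 n3 W \<longrightarrow>
            W \<subseteq> vertices n1 n2 n3 \<and>
            (\<forall>(col, e) \<in> landmark_hyperedges W.
               (col = 3 \<longrightarrow> card e = 2) \<and>
               (col \<in> {1, 2} \<longrightarrow> finite e \<and> card e \<ge> 3)))"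
proof -
  interpret mc n1 n2 n3 using assms by unfold_locales
  show ?thesis
  proof (rule conjI)
    show "odd n2 \<and> kcount n1 n2 n3 \<le> 1 \<longrightarrow>
            (\<exists>x z. (x, 1, z) \<in> WLeft n1 n2 n3 \<and> x \<notin> {1, 2, n1})"
      using small_exists by blast
  next
    show "\<forall>W. middle_cone n1 n2 n3 W \<longrightarrow>
            W \<subseteq> vertices n1 n2 n3 \<and>
            (\<forall>(col, e) \<in> landmark_hyperedges W.
               (col = 3 \<longrightarrow> card e = 2) \<and>
               (col \<in> {1, 2} \<longrightarrow> finite e \<and> card e \<ge> 3))"
    proof (intro allI impI)
      fix W assume "middle_cone n1 n2 n3 W"
      then consider (ev) "even n2" "W = WLeft n1 n2 n3 \<union> WRight n1 n2 n3"
        | (bg) "odd n2" "kcount n1 n2 n3 \<ge> 2" "W = WLeft n1 n2 n3 \<union> WRight n1 n2 n3"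
        | (sm) x z where "odd n2" "kcount n1 n2 n3 \<le> 1" "(x, 1, z) \<in> WLeft n1 n2 n3"
            "W = ((WLeft n1 n2 n3 - {(x, 1, z)}) \<union> {(x, n2, z)}) \<union> WRight n1 n2 n3"
        unfolding middle_cone_def by blast
      then show "W \<subseteq> vertices n1 n2 n3 \<and>
            (\<forall>(col, e) \<in> landmark_hyperedges W.
               (col = 3 \<longrightarrow> card e = 2) \<and>
               (col \<in> {1, 2} \<longrightarrow> finite e \<and> card e \<ge> 3))"
      proof cases
        case ev then show ?thesis using even_case W_gen by simp
      next
        case bg then show ?thesis using big_case W_gen by simp
      next
        case sm then show ?thesis using small_case[of x z] small_W[of x z] by simp
      qed
    qed
  qed
qed

end
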